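(* Let $X$ be a vertex-weighted simplicial complex on $n$ vertices, fix $k$, and let $U^{h}$ be a $\Pi^\pm_k$-projected $(1,\alpha,0)$-unitary encoding of $\Pi^\pm_kP\Pi^\pm_k$, i.e. $(\Pi^\pm_k\otimes\langle0^\alpha|)U^{h}(\Pi^\pm_k\otimes|0^\alpha\rangle)=\Pi^\pm_kP\Pi^\pm_k$. Let $V^{h}=((I_n\otimes HZ\otimes I)\otimes I_\alpha)U^{h}$, where $HZ$ (product of Hadamard and Pauli-$Z$) acts on qubit $n+1$. Then $(\Pi_k\otimes\langle0^\alpha|)V^{h}(\Pi_k\otimes|0^\alpha\rangle)=\frac{\Delta_k}{K\sqrt2}$.
   Context: Vertices $V=\{1,\dots,n\}$ with weights $w:V\to(0,\infty)$. $X$ is a family of nonempty subsets of $V$ closed under nonempty subsets; $X_k$ = $k$-simplices (size $k+1$), identified with Hamming-weight-$(k+1)$ strings $x_\sigma\in\{0,1\}^n$. Oriented $k$-simplex: ordering $[v_0,\dots,v_k]$ up to even permutations, positive if an even permutation of the increasing order. $X^\pm_k=X^+_k\cup X^-_k$, $\overline\sigma$ opposite orientation, $\sigma_+$ the positive one of $\sigma,\overline\sigma$. $[v_0,\dots,v_k]$ induces on the face missing $v_j$ the orientation $(-1)^j[v_0,..,\widehat{v_j},..,v_k]$ and on a coface $\sigma\cup\{u\}$ the orientation $[u,v_0,\dots,v_k]$. For oriented $\sigma,\sigma'$ with distinct underlying simplices, $\sigma\sim_\downarrow\sigma'$ if they share a $(k-1)$-face and induce the same orientation on it; $\sigma\sim_\uparrow\sigma'$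 if their union is a $(k+1)$-simplex of $X$ on which they induce the same orientation; $\nsim_\uparrow$ is its negation; $v_\sigma$ ($v_{\sigma'}$) is the vertex of $\sigma$ not in $\sigma'$ (vice versa); $\mathrm{up}(\sigma)=\{u:\sigma\cup\{u\}\in X_{k+1}\}$. $\Delta_k$ is the matrix indexed by $X^+_k$ with $(\Delta_k)_{\sigma\sigma}=\sum_{u\in\mathrm{up}(\sigma)}w(u)^2+\sum_{v\in\sigma}w(v)^2$, $(\Delta_k)_{\sigma\sigma'}=w(v_\sigma)w(v_{\sigma'})$ if $\sigma\sim_\downarrow\sigma'$ and $\sigma\nsim_\uparrow\overline{\sigma'}$, $-w(v_\sigma)w(v_{\sigma'})$ if $\sigma\sim_\downarrow\overline{\sigma'}$ and $\sigma\nsim_\uparrow\sigma'$, $0$ otherwise. $\Theta$ is an absorbing state, $S_k=X^\pm_k\cup\{\Theta\}$; $|\sigma\rangle$ is the $(n+2)$-qubit state $|x_\sigma\rangle|00\rangle$ ($\sigma\in X^+_k$), $|x_\sigma\rangle|10\rangle$ ($\sigma\in X^-_k$), $|0^n\rangle|01\rangle$ ($\Theta$). $\Pi_k$, $\Pi^\pm_k$ project onto $\mathrm{span}\{|\sigma\rangle\}$ over $X^+_k$, $X^\pm_k$; matrices indexed by $X^+_k$ or $S_k$ act on these spans in this basis and as $0$ elsewhere. $U$ is a $\Pi_s$-projected $(a,\alpha,\epsilon)$-unitary encoding of $A$ if $\|A-a(\Pi_s\otimes\langle0^\alpha|)U(\Pi_s\otimes|0^\alpha\rangle)\|\le\epsilon$.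 For $\sigma\in X^\pm_k$: $i(\sigma)$ = position of the $i$-th $0$ of $x_\sigma$, $\tilde j(\sigma)$ = position of its $j$-th $1$. $K=\max_{\sigma\in X^\pm_k}\big(\sum_{i\in[n]}w(i)^2+\sum_{i\in[n-k-1],j\in[k+1]}w(i(\sigma))w(\tilde j(\sigma))\big)$; $\eta_\sigma=1-\frac1K\sum_{\sigma'\in X^+_k}|(\Delta_k)_{\sigma'\sigma_+}|$. $P$ on $S_k$: for $\sigma,\sigma'\in X^\pm_k$, $P_{\sigma\sigma}=(\sum_{u\in\mathrm{up}(\sigma)}w(u)^2+\sum_{v\in\sigma}w(v)^2)/K$, $P_{\sigma\sigma'}=w(v_\sigma)w(v_{\sigma'})/K$ if $\sigma\sim_\downarrow\sigma'$ and $\sigma\nsim_\uparrow\overline{\sigma'}$, $P_{\sigma\Theta}=\eta_\sigma$, $P_{\Theta\Theta}=1$, all other entries $0$. *)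

theory Defs
  imports "HOL-Analysis.Analysis"
begin

text \<open>An oriented simplex is represented as a pair (s, b): b = True is the
positive orientation (the class of the increasing ordering), b = False
the opposite one.\<close>

type_synonym osimplex = "nat set \<times> bool"

definition is_complex :: "nat \<Rightarrow> nat set set \<Rightarrow> bool" where
  "is_complex n X \<longleftrightarrow> (\<forall>s\<in>X. s \<noteq> {} \<and> s \<subseteq> {1..n}) \<and>
     (\<forall>s\<in>X. \<forall>t. t \<subseteq> s \<and> t \<noteq> {} \<longrightarrow> t \<in> X)"

definition simplices :: "nat set set \<Rightarrow> nat \<Rightarrow> nat set set" where
  "simplices X k = {s\<in>X. card s = k + 1}"

definition Xplus :: "nat set set \<Rightarrow> nat \<Rightarrow> osimplex set" where
  "Xplus X k = {(s, True) | s. s \<in> simplices X k}"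

definition Xminus :: "nat set set \<Rightarrow> nat \<Rightarrow> osimplex set" where
  "Xminus X k = {(s, False) | s. s \<in> simplices X k}"

definition Xpm :: "nat set set \<Rightarrow> nat \<Rightarrow> osimplex set" where
  "Xpm X k = Xplus X k \<union> Xminus X k"

definition opp :: "osimplex \<Rightarrow> osimplex" where
  "opp \<sigma> = (fst \<sigma>, \<not> snd \<sigma>)"

text \<open>Orientation induced by (s,b) on the face missing v: removing v_j from
the increasing ordering [v_0,...,v_k] gives (-1)^j times the increasing
ordering of the face, where j = #{x in s. x < v}.\<close>
definition face_orient :: "osimplex \<Rightarrow> nat \<Rightarrow> osimplex" where
  "face_orient \<sigma> v = (fst \<sigma> - {v}, snd \<sigma> = even (card {x\<in>fst \<sigma>. x < v}))"

text \<open>Orientation induced by (s,b) on the coface s+{u}: the ordering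
[u, v_0, ..., v_k] differs from increasing order by #{x in s. x < u}
transpositions.\<close>
definition coface_orient :: "osimplex \<Rightarrow> nat \<Rightarrow> osimplex" where
  "coface_orient \<sigma> u = (insert u (fst \<sigma>), snd \<sigma> = even (card {x\<in>fst \<sigma>. x < u}))"

definition vdiff :: "osimplex \<Rightarrow> osimplex \<Rightarrow> nat" where
  "vdiff \<sigma> \<sigma>' = the_elem (fst \<sigma> - fst \<sigma>')"

definition down_adj :: "osimplex \<Rightarrow> osimplex \<Rightarrow> bool" where
  "down_adj \<sigma> \<sigma>' \<longleftrightarrow> fst \<sigma> \<noteq> fst \<sigma>' \<and> card (fst \<sigma>) = card (fst \<sigma>') \<and>
     card (fst \<sigma> \<inter> fst \<sigma>') + 1 = card (fst \<sigma>) \<and>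
     face_orient \<sigma> (vdiff \<sigma> \<sigma>') = face_orient \<sigma>' (vdiff \<sigma>' \<sigma>)"

definition up_adj :: "nat set set \<Rightarrow> osimplex \<Rightarrow> osimplex \<Rightarrow> bool" where
  "up_adj X \<sigma> \<sigma>' \<longleftrightarrow> fst \<sigma> \<noteq> fst \<sigma>' \<and> card (fst \<sigma>) = card (fst \<sigma>') \<and>
     fst \<sigma> \<union> fst \<sigma>' \<in> X \<and> card (fst \<sigma> \<union> fst \<sigma>') = card (fst \<sigma>) + 1 \<and>
     coface_orient \<sigma> (vdiff \<sigma>' \<sigma>) = coface_orient \<sigma>' (vdiff \<sigma> \<sigma>')"

definition up_set :: "nat set set \<Rightarrow> nat \<Rightarrow> osimplex \<Rightarrow> nat set" where
  "up_set X k \<sigma> = {u. u \<notin> fst \<sigma> \<and> insert u (fst \<sigma>) \<in> simplices X (k + 1)}"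

definition diag_weight :: "nat set set \<Rightarrow> (nat \<Rightarrow> real) \<Rightarrow> nat \<Rightarrow> osimplex \<Rightarrow> real" where
  "diag_weight X w k \<sigma> = (\<Sum>u\<in>up_set X k \<sigma>. (w u)\<^sup>2) + (\<Sum>v\<in>fst \<sigma>. (w v)\<^sup>2)"

text \<open>The weighted Laplacian Delta_k, indexed by positive simplices.\<close>
definition Lap :: "nat set set \<Rightarrow> (nat \<Rightarrow> real) \<Rightarrow> nat \<Rightarrow> osimplex \<Rightarrow> osimplex \<Rightarrow> real" where
  "Lap X w k \<sigma> \<sigma>' =
     (if \<sigma> = \<sigma>' then diag_weight X w k \<sigma>
      else if down_adj \<sigma> \<sigma>' \<and> \<not> up_adj X \<sigma> (opp \<sigma>')
        then w (vdiff \<sigma> \<sigma>') * w (vdiff \<sigma>' \<sigma>)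
      else if down_adj \<sigma> (opp \<sigma>') \<and> \<not> up_adj X \<sigma> \<sigma>'
        then - (w (vdiff \<sigma> \<sigma>') * w (vdiff \<sigma>' \<sigma>))
      else 0)"

text \<open>x_sigma: position i (1-indexed, list index i-1) is 1 iff vertex i is in sigma.\<close>
definition xstr :: "nat \<Rightarrow> osimplex \<Rightarrow> bool list" where
  "xstr n \<sigma> = map (\<lambda>i. i \<in> fst \<sigma>) [1..<n+1]"

text \<open>Position (1-indexed) of the i-th 0, resp. the j-th 1, of a bit string.\<close>
definition zero_pos :: "bool list \<Rightarrow> nat \<Rightarrow> nat" where
  "zero_pos x i = filter (\<lambda>p. \<not> x ! (p - 1)) [1..<length x + 1] ! (i - 1)"

definition one_pos :: "bool list \<Rightarrow> nat \<Rightarrow> nat" where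
  "one_pos x j = filter (\<lambda>p. x ! (p - 1)) [1..<length x + 1] ! (j - 1)"

definition Kconst :: "nat \<Rightarrow> nat set set \<Rightarrow> (nat \<Rightarrow> real) \<Rightarrow> nat \<Rightarrow> real" where
  "Kconst n X w k = Max ((\<lambda>\<sigma>. (\<Sum>i\<in>{1..n}. (w i)\<^sup>2) +
       (\<Sum>i\<in>{1..n-k-1}. \<Sum>j\<in>{1..k+1}.
          w (zero_pos (xstr n \<sigma>) i) * w (one_pos (xstr n \<sigma>) j))) ` Xpm X k)"

definition pos_of :: "osimplex \<Rightarrow> osimplex" where
  "pos_of \<sigma> = (fst \<sigma>, True)"

definition eta :: "nat \<Rightarrow> nat set set \<Rightarrow> (nat \<Rightarrow> real) \<Rightarrow> nat \<Rightarrow> osimplex \<Rightarrow> real" where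
  "eta n X w k \<sigma> = 1 - (1 / Kconst n X w k) *
      (\<Sum>\<sigma>'\<in>Xplus X k. \<bar>Lap X w k \<sigma>' (pos_of \<sigma>)\<bar>)"

text \<open>States of S_k: Some sigma for oriented simplices, None for the absorbing state Theta.\<close>
type_synonym kstate = "osimplex option"

definition Sk :: "nat set set \<Rightarrow> nat \<Rightarrow> kstate set" where
  "Sk X k = Some ` Xpm X k \<union> {None}"

fun Pmat :: "nat \<Rightarrow> nat set set \<Rightarrow> (nat \<Rightarrow> real) \<Rightarrow> nat \<Rightarrow> kstate \<Rightarrow> kstate \<Rightarrow> real" where
  "Pmat n X w k (Some \<sigma>) (Some \<sigma>') =
     (if \<sigma> = \<sigma>' then diag_weight X w k \<sigma> / Kconst n X w k
      else if down_adj \<sigma> \<sigma>' \<and> \<not> up_adj X \<sigma> (opp \<sigma>')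
        then w (vdiff \<sigma> \<sigma>') * w (vdiff \<sigma>' \<sigma>) / Kconst n X w k
      else 0)"
| "Pmat n X w k (Some \<sigma>) None = eta n X w k \<sigma>"
| "Pmat n X w k None None = 1"
| "Pmat n X w k None (Some \<sigma>') = 0"

text \<open>Operators on N qubits are complex matrices indexed by bit strings of
length N (computational basis; False = 0, True = 1; list index i is qubit i+1).\<close>
type_synonym qop = "bool list \<Rightarrow> bool list \<Rightarrow> complex"

definition bits :: "nat \<Rightarrow> bool list set" where
  "bits N = {xs. length xs = N}"

definition mmult :: "nat \<Rightarrow> qop \<Rightarrow> qop \<Rightarrow> qop" where
  "mmult N A B = (\<lambda>x y. \<Sum>z\<in>bits N. A x z * B z y)"

definition ident :: "qop" where
  "ident = (\<lambda>x y. if x = y then 1 else 0)"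

definition adjoint :: "qop \<Rightarrow> qop" where
  "adjoint A = (\<lambda>x y. cnj (A y x))"

definition op_eq :: "nat \<Rightarrow> qop \<Rightarrow> qop \<Rightarrow> bool" where
  "op_eq N A B \<longleftrightarrow> (\<forall>x\<in>bits N. \<forall>y\<in>bits N. A x y = B x y)"

definition unitary_op :: "nat \<Rightarrow> qop \<Rightarrow> bool" where
  "unitary_op N U \<longleftrightarrow> op_eq N (mmult N (adjoint U) U) ident \<and> op_eq N (mmult N U (adjoint U)) ident"

definition proj :: "bool list set \<Rightarrow> qop" where
  "proj B = (\<lambda>x y. if x = y \<and> x \<in> B then 1 else 0)"

text \<open>(Pi tensor <0^a|) U (Pi tensor |0^a>), an operator on the m system qubits,
for U on m + a qubits (ancilla register last).\<close>
definition anc_block :: "nat \<Rightarrow> nat \<Rightarrow> bool list set \<Rightarrow> qop \<Rightarrow> qop" where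
  "anc_block m a B U = (\<lambda>x y. \<Sum>x'\<in>bits m. \<Sum>y'\<in>bits m.
      proj B x x' * U (x' @ replicate a False) (y' @ replicate a False) * proj B y' y)"

definition embed :: "'s set \<Rightarrow> ('s \<Rightarrow> bool list) \<Rightarrow> ('s \<Rightarrow> 's \<Rightarrow> complex) \<Rightarrow> qop" where
  "embed S code M = (\<lambda>x y. \<Sum>s\<in>S. \<Sum>t\<in>S.
      (if x = code s \<and> y = code t then M s t else 0))"

text \<open>Single-qubit gate G acting on qubit j+1 (list index j) of N qubits.\<close>
definition gate_on :: "nat \<Rightarrow> nat \<Rightarrow> (bool \<Rightarrow> bool \<Rightarrow> complex) \<Rightarrow> qop" where
  "gate_on N j G = (\<lambda>x y. if (\<forall>i<N. i \<noteq> j \<longrightarrow> x ! i = y ! i) then G (x ! j) (y ! j) else 0)"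

definition hadamard :: "bool \<Rightarrow> bool \<Rightarrow> complex" where
  "hadamard a b = (if a \<and> b then -1 else 1) / complex_of_real (sqrt 2)"

definition pauliZ :: "bool \<Rightarrow> bool \<Rightarrow> complex" where
  "pauliZ a b = (if a = b then (if a then -1 else 1) else 0)"

definition HZ :: "bool \<Rightarrow> bool \<Rightarrow> complex" where
  "HZ a b = (\<Sum>c\<in>UNIV. hadamard a c * pauliZ c b)"

fun ket :: "nat \<Rightarrow> kstate \<Rightarrow> bool list" where
  "ket n (Some \<sigma>) = xstr n \<sigma> @ [\<not> snd \<sigma>, False]"
| "ket n None = replicate n False @ [False, True]"

end

theory Submission
  imports Defs
begin

lemma bits_finite[simp]: "finite (bits N)"
  using finite_lists_length_eq[of "UNIV::bool set" N] by (simp add: bits_def)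

lemma anc_block_at:
  assumes "x \<in> bits m" "y \<in> bits m"
  shows "anc_block m a B U x y =
    (if x \<in> B \<and> y \<in> B then U (x @ replicate a False) (y @ replicate a False) else 0)"
proof -
  have "anc_block m a B U x y = (\<Sum>x'\<in>bits m. if x' = x then
      (\<Sum>y'\<in>bits m. proj B x x' * U (x' @ replicate a False) (y' @ replicate a False) * proj B y' y) else 0)"
    unfolding anc_block_def by (intro sum.cong refl) (auto simp: proj_def)
  also have "\<dots> = (\<Sum>y'\<in>bits m. proj B x x * U (x @ replicate a False) (y' @ replicate a False) * proj B y' y)"
    using assms by (simp add: sum.delta')
  also have "\<dots> = (\<Sum>y'\<in>bits m. if y' = y then proj B x x * U (x @ replicate a False) (y' @ replicate a False) * proj B y' y else 0)"
    by (intro sum.cong refl) (auto simp: proj_def)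
  also have "\<dots> = proj B x x * U (x @ replicate a False) (y @ replicate a False) * proj B y y"
    using assms by (simp add: sum.delta')
  finally show ?thesis by (simp add: proj_def)
qed

lemma mmult_proj_left:
  assumes "x \<in> bits N"
  shows "mmult N (proj B) A x y = (if x \<in> B then A x y else 0)"
proof -
  have "mmult N (proj B) A x y = (\<Sum>z\<in>bits N. if z = x then proj B x z * A z y else 0)"
    unfolding mmult_def by (intro sum.cong refl) (auto simp: proj_def)
  also have "\<dots> = proj B x x * A x y" using assms by (simp add: sum.delta')
  finally show ?thesis by (simp add: proj_def)
qed

lemma mmult_proj_right:
  assumes "y \<in> bits N"
  shows "mmult N A (proj B) x y = (if y \<in> B then A x y else 0)"
proof -
  have "mmult N A (proj B) x y = (\<Sum>z\<in>bits N. if z = y then A x z * proj B z y else 0)"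
    unfolding mmult_def by (intro sum.cong refl) (auto simp: proj_def)
  also have "\<dots> = A x y * proj B y y" using assms by (simp add: sum.delta')
  finally show ?thesis by (simp add: proj_def)
qed

lemma embed_at:
  assumes "inj_on code S" "s \<in> S" "t \<in> S" "finite S"
  shows "embed S code M (code s) (code t) = M s t"
proof -
  have "embed S code M (code s) (code t) =
      (\<Sum>s'\<in>S. if s' = s then (\<Sum>t'\<in>S. if t' = t then M s' t' else 0) else 0)"
    unfolding embed_def using assms(1-3)
    by (intro sum.cong refl) (auto simp: inj_on_eq_iff intro!: sum.cong)
  also have "\<dots> = M s t" using assms by (simp add: sum.delta')
  finally show ?thesis .
qed

lemma embed_out:
  assumes "x \<notin> code ` S \<or> y \<notin> code ` S"
  shows "embed S code M x y = 0"
  using assms unfolding embed_def by (intro sum.neutral) (auto intro!: sum.neutral)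

lemma mmult_gate:
  assumes "x \<in> bits N" "j < N"
  shows "mmult N (gate_on N j G) U x y =
     G (x ! j) (x ! j) * U x y + G (x ! j) (\<not> x ! j) * U (x[j := \<not> x ! j]) y"
proof -
  let ?x' = "x[j := \<not> x ! j]"
  have len: "length x = N" using assms by (simp add: bits_def)
  have ne: "?x' \<noteq> x" using assms len by (metis nth_list_update_eq)
  have x'b: "?x' \<in> bits N" using len by (simp add: bits_def)
  have key: "z \<in> bits N \<Longrightarrow> (\<forall>i<N. i \<noteq> j \<longrightarrow> x ! i = z ! i) \<longleftrightarrow> z = x \<or> z = ?x'" for z
  proof
    assume zb: "z \<in> bits N" and h: "\<forall>i<N. i \<noteq> j \<longrightarrow> x ! i = z ! i"
    have lz: "length z = N" using zb by (simp add: bits_def)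
    show "z = x \<or> z = ?x'"
    proof (cases "z ! j = x ! j")
      case True
      have "z ! i = x ! i" if "i < N" for i using h True that by (cases "i = j") auto
      hence "z = x" using lz len by (intro nth_equalityI) auto
      thus ?thesis by simp
    next
      case False
      hence "z = ?x'" using h lz len assms(2)
        by (intro nth_equalityI) (auto simp: nth_list_update)
      thus ?thesis by simp
    qed
  next
    assume "z = x \<or> z = ?x'"
    thus "\<forall>i<N. i \<noteq> j \<longrightarrow> x ! i = z ! i" by (auto simp: nth_list_update)
  qed
  have "mmult N (gate_on N j G) U x y =
     (\<Sum>z\<in>bits N. if z \<in> {x, ?x'} then gate_on N j G x z * U z y else 0)"
    unfolding mmult_def by (intro sum.cong refl) (auto simp: gate_on_def key)
  also have "\<dots> = (\<Sum>z\<in>{x, ?x'}. gate_on N j G x z * U z y)"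
    proof -
    have "bits N \<inter> {z. z \<in> {x, ?x'}} = {x, ?x'}" using assms x'b by auto
    thus ?thesis by (subst sum.If_cases) auto
  qed
  also have "\<dots> = gate_on N j G x x * U x y + gate_on N j G x ?x' * U ?x' y"
    using ne by simp
  also have "\<dots> = G (x ! j) (x ! j) * U x y + G (x ! j) (\<not> x ! j) * U (x[j := \<not> x ! j]) y"
    using len assms(2) by (simp add: gate_on_def nth_list_update)
  finally show ?thesis .
qed


lemma Xpm_iff: "\<sigma> \<in> Xpm X k \<longleftrightarrow> fst \<sigma> \<in> simplices X k"
  by (cases \<sigma>) (auto simp: Xpm_def Xplus_def Xminus_def)

lemma Xplus_iff: "\<sigma> \<in> Xplus X k \<longleftrightarrow> fst \<sigma> \<in> simplices X k \<and> snd \<sigma>"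
  by (cases \<sigma>) (auto simp: Xplus_def)

lemma Xplus_sub: "Xplus X k \<subseteq> Xpm X k"
  by (auto simp: Xpm_def)

lemma simp_sub: "is_complex n X \<Longrightarrow> s \<in> simplices X k \<Longrightarrow> s \<subseteq> {1..n}"
  by (auto simp: is_complex_def simplices_def)

lemma finite_Xpm: assumes "is_complex n X" shows "finite (Xpm X k)"
proof -
  have "simplices X k \<subseteq> Pow {1..n}" using simp_sub[OF assms] by blast
  hence f: "finite (simplices X k)" by (rule finite_subset) simp
  have "Xpm X k \<subseteq> simplices X k \<times> UNIV" by (auto simp: Xpm_iff mem_Times_iff)
  thus ?thesis by (rule finite_subset) (simp add: f)
qed

lemma len_xstr[simp]: "length (xstr n \<sigma>) = n"
  by (simp add: xstr_def)

lemma len_ket[simp]: "length (ket n s) = n + 2"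
  by (cases s) auto

lemma xstr_inj:
  assumes "fst \<sigma> \<subseteq> {1..n}" "fst \<tau> \<subseteq> {1..n}" "xstr n \<sigma> = xstr n \<tau>"
  shows "fst \<sigma> = fst \<tau>"
proof -
  have "\<forall>i\<in>set [1..<n+1]. (i \<in> fst \<sigma>) = (i \<in> fst \<tau>)"
    using assms(3) unfolding xstr_def map_eq_conv .
  hence h: "\<forall>i\<in>{1..n}. (i \<in> fst \<sigma>) = (i \<in> fst \<tau>)"
    by (metis Suc_eq_plus1 atLeastLessThanSuc_atLeastAtMost set_upt)
  show ?thesis
  proof (rule set_eqI)
    fix i show "(i \<in> fst \<sigma>) = (i \<in> fst \<tau>)" using h assms(1,2) by (cases "i \<in> {1..n}") auto
  qed
qed

lemma ket_inj: assumes "is_complex n X" shows "inj_on (ket n) (Sk X k)"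
proof (rule inj_onI)
  fix a b assume a: "a \<in> Sk X k" and b: "b \<in> Sk X k" and e: "ket n a = ket n b"
  show "a = b"
  proof (cases a)
    case None
    thus ?thesis using e by (cases b) auto
  next
    case (Some \<sigma>)
    then obtain \<tau> where bt: "b = Some \<tau>" using e by (cases b) auto
    have \<sigma>: "\<sigma> \<in> Xpm X k" using a Some by (auto simp: Sk_def)
    have \<tau>: "\<tau> \<in> Xpm X k" using b bt by (auto simp: Sk_def)
    have "xstr n \<sigma> = xstr n \<tau> \<and> snd \<sigma> = snd \<tau>" using e Some bt by auto
    moreover have "fst \<sigma> = fst \<tau>"
      using xstr_inj[of \<sigma> n \<tau>] simp_sub[OF assms] \<sigma> \<tau> calculation by (auto simp: Xpm_iff)
    ultimately have "fst \<sigma> = fst \<tau> \<and> snd \<sigma> = snd \<tau>" by simp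
    thus ?thesis using Some bt by (simp add: prod_eq_iff)
  qed
qed

lemma finite_Sk: "is_complex n X \<Longrightarrow> finite (Sk X k)"
  using finite_Xpm by (auto simp: Sk_def)

lemma enc_at:
  assumes cplx: "is_complex n X"
    and enc: "op_eq (n + 2)
        (anc_block (n + 2) \<alpha> (ket n ` Some ` Xpm X k) U)
        (mmult (n + 2) (mmult (n + 2) (proj (ket n ` Some ` Xpm X k))
             (embed (Sk X k) (ket n) (\<lambda>s t. complex_of_real (Pmat n X w k s t))))
           (proj (ket n ` Some ` Xpm X k)))"
    and s: "\<sigma> \<in> Xpm X k" and t: "\<tau> \<in> Xpm X k"
  shows "U (ket n (Some \<sigma>) @ replicate \<alpha> False) (ket n (Some \<tau>) @ replicate \<alpha> False)
       = complex_of_real (Pmat n X w k (Some \<sigma>) (Some \<tau>))"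
proof -
  let ?x = "ket n (Some \<sigma>)" and ?y = "ket n (Some \<tau>)"
  have xb: "?x \<in> bits (n+2)" and yb: "?y \<in> bits (n+2)" by (simp_all add: bits_def)
  have xB: "?x \<in> ket n ` Some ` Xpm X k" and yB: "?y \<in> ket n ` Some ` Xpm X k"
    using s t by (blast intro: imageI)+
  have "anc_block (n + 2) \<alpha> (ket n ` Some ` Xpm X k) U ?x ?y = (mmult (n + 2) (mmult (n + 2) (proj (ket n ` Some ` Xpm X k))
             (embed (Sk X k) (ket n) (\<lambda>s t. complex_of_real (Pmat n X w k s t))))
           (proj (ket n ` Some ` Xpm X k))) ?x ?y"
    using enc xb yb unfolding op_eq_def by blast
  also have "\<dots> = embed (Sk X k) (ket n) (\<lambda>s t. complex_of_real (Pmat n X w k s t)) ?x ?y"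
    using xb yb xB yB by (simp add: mmult_proj_left mmult_proj_right)
  also have "\<dots> = complex_of_real (Pmat n X w k (Some \<sigma>) (Some \<tau>))"
    using s t by (intro embed_at ket_inj[OF cplx] finite_Sk[OF cplx]) (auto simp: Sk_def)
  finally show ?thesis by (simp only: anc_block_at[OF xb yb] xB yB if_True simp_thms)
qed

lemma face_opp: "face_orient (opp \<sigma>) v = opp (face_orient \<sigma> v)"
  by (auto simp: face_orient_def opp_def)

lemma coface_opp: "coface_orient (opp \<sigma>) v = opp (coface_orient \<sigma> v)"
  by (auto simp: coface_orient_def opp_def)

lemma vdiff_opp[simp]: "vdiff (opp \<sigma>) \<tau> = vdiff \<sigma> \<tau>" "vdiff \<sigma> (opp \<tau>) = vdiff \<sigma> \<tau>"
  by (auto simp: vdiff_def opp_def)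

lemma fst_opp[simp]: "fst (opp \<sigma>) = fst \<sigma>" by (simp add: opp_def)

lemma opp_eq_iff: "opp a = b \<longleftrightarrow> a = opp b"
  by (cases a; cases b) (auto simp: opp_def)

lemma opp_neq: "opp a \<noteq> a" by (cases a) (auto simp: opp_def)
lemma opp_neq2: "a \<noteq> opp a" by (cases a) (auto simp: opp_def)
lemma opp_opp[simp]: "opp (opp a) = a" by (cases a) (auto simp: opp_def)

lemma down_opp: "down_adj (opp \<sigma>) \<tau> \<longleftrightarrow> down_adj \<sigma> (opp \<tau>)"
  unfolding down_adj_def by (simp add: face_opp opp_eq_iff)

lemma up_opp: "up_adj X (opp \<sigma>) (opp \<tau>) \<longleftrightarrow> up_adj X \<sigma> \<tau>"
  unfolding up_adj_def by (simp add: coface_opp opp_eq_iff)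

lemma down_excl: "\<not> (down_adj \<sigma> \<tau> \<and> down_adj \<sigma> (opp \<tau>))"
  unfolding down_adj_def by (simp add: face_opp opp_neq2)

lemma real_key:
  assumes "snd \<sigma>" "snd \<tau>" "fst \<sigma> = fst \<tau> \<Longrightarrow> \<sigma> = \<tau>"
  shows "Pmat n X w k (Some \<sigma>) (Some \<tau>) - Pmat n X w k (Some (opp \<sigma>)) (Some \<tau>)
     = Lap X w k \<sigma> \<tau> / Kconst n X w k"
proof (cases "\<sigma> = \<tau>")
  case True
  have "opp \<sigma> \<noteq> \<sigma>" by (rule opp_neq)
  moreover have "\<not> down_adj (opp \<sigma>) \<sigma>" by (simp add: down_adj_def)
  ultimately show ?thesis using True by (simp add: Lap_def)
next
  case False
  have ne: "opp \<sigma> \<noteq> \<tau>" using assms by (auto simp: opp_def)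
  have "\<not> (down_adj \<sigma> \<tau> \<and> down_adj \<sigma> (opp \<tau>))" by (rule down_excl)
  thus ?thesis using False ne
    by (auto simp: Lap_def down_opp up_opp opp_eq_iff diff_divide_distrib)
qed

lemma HZ_vals: "HZ False False = 1 / complex_of_real (sqrt 2)"
  "HZ False True = - 1 / complex_of_real (sqrt 2)"
  by (simp_all add: HZ_def hadamard_def pauliZ_def UNIV_bool)


lemma ket_flip:
  assumes "snd \<sigma>"
  shows "(ket n (Some \<sigma>) @ replicate a False)[n := True] = ket n (Some (opp \<sigma>)) @ replicate a False"
    and "(ket n (Some \<sigma>) @ replicate a False) ! n = False"
  using assms by (auto simp: opp_def list_update_append nth_append xstr_def)

lemma aux_c: "(1 / c) * a + (- 1 / c) * b = (a - b) / (c::complex)"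
  by (simp add: diff_divide_distrib)

theorem proposition3p9:
  fixes n k \<alpha> :: nat and w :: "nat \<Rightarrow> real" and X :: "nat set set"
    and U :: qop
  assumes cplx: "is_complex n X"
    and wpos: "\<forall>v\<in>{1..n}. w v > 0"
    and unit: "unitary_op (n + 2 + \<alpha>) U"
    and enc: "op_eq (n + 2)
        (anc_block (n + 2) \<alpha> (ket n ` Some ` Xpm X k) U)
        (mmult (n + 2) (mmult (n + 2) (proj (ket n ` Some ` Xpm X k))
             (embed (Sk X k) (ket n) (\<lambda>s t. complex_of_real (Pmat n X w k s t))))
           (proj (ket n ` Some ` Xpm X k)))"
  shows "op_eq (n + 2)
     (anc_block (n + 2) \<alpha> (ket n ` Some ` Xplus X k)
        (mmult (n + 2 + \<alpha>) (gate_on (n + 2 + \<alpha>) n HZ) U))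
     (embed (Xplus X k) (\<lambda>\<sigma>. ket n (Some \<sigma>))
        (\<lambda>\<sigma> \<sigma>'. complex_of_real (Lap X w k \<sigma> \<sigma>' / (Kconst n X w k * sqrt 2))))"
  unfolding op_eq_def
proof (intro ballI)
  fix x y assume xb: "x \<in> bits (n+2)" and yb: "y \<in> bits (n+2)"
  let ?B = "ket n ` Some ` Xplus X k"
  let ?code = "\<lambda>\<sigma>. ket n (Some \<sigma>)"
  have cB: "?code ` Xplus X k = ?B" by (simp add: image_image)
  show "anc_block (n + 2) \<alpha> ?B (mmult (n + 2 + \<alpha>) (gate_on (n + 2 + \<alpha>) n HZ) U) x y =
     embed (Xplus X k) ?code
        (\<lambda>\<sigma> \<sigma>'. complex_of_real (Lap X w k \<sigma> \<sigma>' / (Kconst n X w k * sqrt 2))) x y"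
  proof (cases "x \<in> ?B \<and> y \<in> ?B")
    case False
    have l: "anc_block (n + 2) \<alpha> ?B (mmult (n + 2 + \<alpha>) (gate_on (n + 2 + \<alpha>) n HZ) U) x y = 0"
      by (subst anc_block_at[OF xb yb]) (rule if_not_P[OF False])
    have r: "embed (Xplus X k) ?code
        (\<lambda>\<sigma> \<sigma>'. complex_of_real (Lap X w k \<sigma> \<sigma>' / (Kconst n X w k * sqrt 2))) x y = 0"
      by (rule embed_out) (unfold cB, use False in blast)
    show ?thesis using l r by simp
  next
    case True
    then obtain \<sigma> \<tau> where s: "\<sigma> \<in> Xplus X k" and t: "\<tau> \<in> Xplus X k"
      and x: "x = ?code \<sigma>" and y: "y = ?code \<tau>" by blast
    have spm: "\<sigma> \<in> Xpm X k" "\<tau> \<in> Xpm X k" "opp \<sigma> \<in> Xpm X k"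
      using s t by (auto simp: Xplus_iff Xpm_iff)
    have ss: "snd \<sigma>" "snd \<tau>" using s t by (auto simp: Xplus_iff)
    have st: "fst \<sigma> = fst \<tau> \<Longrightarrow> \<sigma> = \<tau>" using ss by (simp add: prod_eq_iff)
    let ?x0 = "?code \<sigma> @ replicate \<alpha> False" and ?y0 = "?code \<tau> @ replicate \<alpha> False"
    have x0b: "?x0 \<in> bits (n + 2 + \<alpha>)" by (simp add: bits_def)
    have "anc_block (n + 2) \<alpha> ?B (mmult (n + 2 + \<alpha>) (gate_on (n + 2 + \<alpha>) n HZ) U) x y
        = mmult (n + 2 + \<alpha>) (gate_on (n + 2 + \<alpha>) n HZ) U ?x0 ?y0"
      by (subst anc_block_at[OF xb yb]) (unfold x y, rule if_P[OF True[unfolded x y]])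
    also have "\<dots> = HZ False False * U ?x0 ?y0 + HZ False True * U (ket n (Some (opp \<sigma>)) @ replicate \<alpha> False) ?y0"
    proof -
      have g: "mmult (n + 2 + \<alpha>) (gate_on (n + 2 + \<alpha>) n HZ) U ?x0 ?y0 =
          HZ (?x0 ! n) (?x0 ! n) * U ?x0 ?y0 + HZ (?x0 ! n) (\<not> ?x0 ! n) * U (?x0[n := \<not> ?x0 ! n]) ?y0"
        by (rule mmult_gate[OF x0b]) simp
      show ?thesis using g by (simp only: ket_flip(2)[OF ss(1)] not_False_eq_True ket_flip(1)[OF ss(1)])
    qed
    also have "\<dots> = (complex_of_real (Pmat n X w k (Some \<sigma>) (Some \<tau>))
        - complex_of_real (Pmat n X w k (Some (opp \<sigma>)) (Some \<tau>))) / complex_of_real (sqrt 2)"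
      unfolding enc_at[OF cplx enc spm(1,2)] enc_at[OF cplx enc spm(3,2)] HZ_vals
      by (rule aux_c)
    also have "\<dots> = complex_of_real ((Pmat n X w k (Some \<sigma>) (Some \<tau>) - Pmat n X w k (Some (opp \<sigma>)) (Some \<tau>)) / sqrt 2)"
      by (simp only: of_real_diff of_real_divide)
    also have "\<dots> = complex_of_real (Lap X w k \<sigma> \<tau> / (Kconst n X w k * sqrt 2))"
      by (simp only: real_key[OF ss st] divide_divide_eq_left)
    also have "\<dots> = embed (Xplus X k) ?code
        (\<lambda>\<sigma> \<sigma>'. complex_of_real (Lap X w k \<sigma> \<sigma>' / (Kconst n X w k * sqrt 2))) x y"
    proof -
      have inj: "inj_on ?code (Xplus X k)"
      proof (rule inj_onI)
        fix a b assume a: "a \<in> Xplus X k" and b: "b \<in> Xplus X k" and e: "?code a = ?code b"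
        have "Some a \<in> Sk X k" "Some b \<in> Sk X k" using a b Xplus_sub by (auto simp: Sk_def)
        hence "Some a = Some b" using inj_onD[OF ket_inj[OF cplx, of k] e] by blast
        thus "a = b" by simp
      qed
      have fin: "finite (Xplus X k)" by (rule finite_subset[OF Xplus_sub finite_Xpm[OF cplx]])
      show ?thesis unfolding x y by (rule embed_at[OF inj s t fin, symmetric])
    qed
    finally show ?thesis .
  qed
qed

end
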